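(* Let $M,N$ be finitary matroids on $E$, $b=(B_M,B_N)$ with $B_M$ a base of $M$ and $B_N$ a base of $N$. Let $\mathcal{P}=\langle P_\alpha:\alpha<\xi\rangle$ be a transfinite sequence of finite directed paths without shortcuts in $D(b)$ such that for every $\beta<\alpha<\xi$ the path $P_\alpha$ is disjoint from all escorting circuits (w.r.t. $b$) of the arcs of $P_\beta$. Let $A(\mathcal{P}):=\bigcup_{\alpha<\xi}A(P_\alpha)$, let $B_M^\xi$ be obtained from $B_M$ by adding the tails and deleting the heads of the arcs in $A(\mathcal{P})\cap D_M(B_M)$, and let $B_N^\xi$ be obtained from $B_N$ by adding the tails and deleting the heads of the arcs of $D_N(B_N)$ whose reversals lie in $A(\mathcal{P})\cap D_N^{-1}(B_N)$. Then $B_M^\xi$ is a base of $M$ and $B_N^\xi$ is a base of $N$. Furthermore, if $U_{<\xi}$ is the union of the escorting circuits of the arcs of all $P_\alpha$, $\alpha<\xi$, then $D_M(B_M^\xi)[E\setminus U_{<\xi}]=D_M(B_M)[E\setminus U_{<\xi}]$ and $D_N(B_N^\xi)[E\setminus U_{<\xi}]=D_N(B_N)[E\setminus U_{<\xi}]$.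
   Context: For a base $B$ of a matroid $M$ on $E$, $D_M(B)$ is the digraph on $E$ with $ef\in D_M(B)$ iff $e\in E\setminus B$ and $f\in C_M(e,B)\setminus\{e\}$ ($C_M(e,B)$ the fundamental circuit of $e$ on $B$). $D^{-1}$ reverses all arcs; $D(b):=D_M(B_M)\cup D_N^{-1}(B_N)$. Escorting circuits of an arc $ef\in D(b)$: $C_M(e,B_M)$ if $ef\in D_M(B_M)$, and $C_N(f,B_N)$ if $ef\in D_N^{-1}(B_N)$. A path is a finite directed path; $A(P)$ denotes its arc set. A shortcut of $P$ is an arc $ef\in D(b)$ with $e,f$ on $P$, $f$ later than $e$ on $P$, and $ef\notin A(P)$. $D[X]$ denotes the subdigraph induced on $X$. *)

theory Defs
  imports Main
begin

text \<open>A matroid on ground set E is given by its independence predicate (axioms of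
Bruhn, Diestel, Kriesell, Pendavingh, Wollan for possibly infinite matroids).\<close>

definition maximal_in :: "'a set set \<Rightarrow> 'a set \<Rightarrow> bool" where
  "maximal_in S X \<longleftrightarrow> X \<in> S \<and> (\<forall>Y\<in>S. X \<subseteq> Y \<longrightarrow> Y = X)"

definition base :: "'a set \<Rightarrow> ('a set \<Rightarrow> bool) \<Rightarrow> 'a set \<Rightarrow> bool" where
  "base E indep B \<longleftrightarrow> maximal_in {I. I \<subseteq> E \<and> indep I} B"

definition matroid :: "'a set \<Rightarrow> ('a set \<Rightarrow> bool) \<Rightarrow> bool" where
  "matroid E indep \<longleftrightarrow>
     (\<forall>I. indep I \<longrightarrow> I \<subseteq> E) \<and>
     indep {} \<and>
     (\<forall>I J. indep I \<and> J \<subseteq> I \<longrightarrow> indep J) \<and>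
     (\<forall>I I'. indep I \<and> \<not> base E indep I \<and> base E indep I'
          \<longrightarrow> (\<exists>x\<in>I' - I. indep (insert x I))) \<and>
     (\<forall>I X. indep I \<and> I \<subseteq> X \<and> X \<subseteq> E
          \<longrightarrow> (\<exists>J. maximal_in {I'. indep I' \<and> I \<subseteq> I' \<and> I' \<subseteq> X} J))"

definition finitary_matroid :: "'a set \<Rightarrow> ('a set \<Rightarrow> bool) \<Rightarrow> bool" where
  "finitary_matroid E indep \<longleftrightarrow> matroid E indep \<and>
     (\<forall>I \<subseteq> E. (\<forall>F \<subseteq> I. finite F \<longrightarrow> indep F) \<longrightarrow> indep I)"

definition circuit :: "'a set \<Rightarrow> ('a set \<Rightarrow> bool) \<Rightarrow> 'a set \<Rightarrow> bool" where
  "circuit E indep C \<longleftrightarrow> C \<subseteq> E \<and> \<not> indep C \<and> (\<forall>D. D \<subset> C \<longrightarrow> indep D)"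

definition fcirc :: "'a set \<Rightarrow> ('a set \<Rightarrow> bool) \<Rightarrow> 'a \<Rightarrow> 'a set \<Rightarrow> 'a set" where
  "fcirc E indep e B = (THE C. circuit E indep C \<and> C \<subseteq> insert e B)"

definition Dig :: "'a set \<Rightarrow> ('a set \<Rightarrow> bool) \<Rightarrow> 'a set \<Rightarrow> ('a \<times> 'a) set" where
  "Dig E indep B = {(e,f). e \<in> E - B \<and> f \<in> fcirc E indep e B - {e}}"

definition Db :: "'a set \<Rightarrow> ('a set \<Rightarrow> bool) \<Rightarrow> ('a set \<Rightarrow> bool) \<Rightarrow> 'a set \<Rightarrow> 'a set \<Rightarrow> ('a \<times> 'a) set" where
  "Db E M N BM BN = Dig E M BM \<union> (Dig E N BN)\<inverse>"

definition escorts :: "'a set \<Rightarrow> ('a set \<Rightarrow> bool) \<Rightarrow> ('a set \<Rightarrow> bool) \<Rightarrow> 'a set \<Rightarrow> 'a set \<Rightarrow> 'a \<times> 'a \<Rightarrow> 'a set set" where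
  "escorts E M N BM BN a =
     {C. (a \<in> Dig E M BM \<and> C = fcirc E M (fst a) BM) \<or>
         (a \<in> (Dig E N BN)\<inverse> \<and> C = fcirc E N (snd a) BN)}"

definition is_path :: "('a \<times> 'a) set \<Rightarrow> 'a list \<Rightarrow> bool" where
  "is_path D p \<longleftrightarrow> p \<noteq> [] \<and> distinct p \<and> (\<forall>i. Suc i < length p \<longrightarrow> (p ! i, p ! Suc i) \<in> D)"

definition arcs :: "'a list \<Rightarrow> ('a \<times> 'a) set" where
  "arcs p = {(p ! i, p ! Suc i) | i. Suc i < length p}"

definition shortcut :: "('a \<times> 'a) set \<Rightarrow> 'a list \<Rightarrow> 'a \<times> 'a \<Rightarrow> bool" where
  "shortcut D p a \<longleftrightarrow> a \<in> D \<and> a \<notin> arcs p \<and>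
     (\<exists>i j. i < j \<and> j < length p \<and> a = (p ! i, p ! j))"

definition induced :: "('a \<times> 'a) set \<Rightarrow> 'a set \<Rightarrow> ('a \<times> 'a) set" where
  "induced D X = D \<inter> (X \<times> X)"

end

theory Submission
  imports Defs "HOL-Library.Product_Lexorder"
begin


definition mx :: "('a set \<Rightarrow> bool) \<Rightarrow> 'a set \<Rightarrow> 'a set \<Rightarrow> bool" where
  "mx M X I \<longleftrightarrow> I \<subseteq> X \<and> M I \<and> (\<forall>y\<in>X - I. \<not> M (insert y I))"

context
  fixes E :: "'a set" and M :: "'a set \<Rightarrow> bool"
  assumes fm: "finitary_matroid E M"
begin

lemma mat: "matroid E M" using fm unfolding finitary_matroid_def by (elim conjE)

lemma m_sub: "M I \<Longrightarrow> I \<subseteq> E"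
proof -
  have "\<forall>I. M I \<longrightarrow> I \<subseteq> E" using mat unfolding matroid_def by (elim conjE)
  thus "M I \<Longrightarrow> I \<subseteq> E" by blast
qed

lemma m_mono: "M I \<Longrightarrow> J \<subseteq> I \<Longrightarrow> M J"
proof -
  have "\<forall>I J. M I \<and> J \<subseteq> I \<longrightarrow> M J" using mat unfolding matroid_def by (elim conjE)
  thus "M I \<Longrightarrow> J \<subseteq> I \<Longrightarrow> M J" by blast
qed

lemma m_aug: "M I \<Longrightarrow> \<not> base E M I \<Longrightarrow> base E M I' \<Longrightarrow> \<exists>x\<in>I' - I. M (insert x I)"
proof -
  have "\<forall>I I'. M I \<and> \<not> base E M I \<and> base E M I'
          \<longrightarrow> (\<exists>x\<in>I' - I. M (insert x I))" using mat unfolding matroid_def by (elim conjE)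
  thus "M I \<Longrightarrow> \<not> base E M I \<Longrightarrow> base E M I' \<Longrightarrow> \<exists>x\<in>I' - I. M (insert x I)" by blast
qed

lemma m_max: "M I \<Longrightarrow> I \<subseteq> X \<Longrightarrow> X \<subseteq> E \<Longrightarrow>
   \<exists>J. maximal_in {I'. M I' \<and> I \<subseteq> I' \<and> I' \<subseteq> X} J"
proof -
  have "\<forall>I X. M I \<and> I \<subseteq> X \<and> X \<subseteq> E
          \<longrightarrow> (\<exists>J. maximal_in {I'. M I' \<and> I \<subseteq> I' \<and> I' \<subseteq> X} J)"
    using mat unfolding matroid_def by (elim conjE)
  thus "M I \<Longrightarrow> I \<subseteq> X \<Longrightarrow> X \<subseteq> E \<Longrightarrow>
   \<exists>J. maximal_in {I'. M I' \<and> I \<subseteq> I' \<and> I' \<subseteq> X} J" by blast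
qed

lemma m_fin: "I \<subseteq> E \<Longrightarrow> (\<And>F. F \<subseteq> I \<Longrightarrow> finite F \<Longrightarrow> M F) \<Longrightarrow> M I"
proof -
  have "\<forall>I \<subseteq> E. (\<forall>F \<subseteq> I. finite F \<longrightarrow> M F) \<longrightarrow> M I"
    using fm unfolding finitary_matroid_def by (elim conjE)
  thus "I \<subseteq> E \<Longrightarrow> (\<And>F. F \<subseteq> I \<Longrightarrow> finite F \<Longrightarrow> M F) \<Longrightarrow> M I" by blast
qed

lemma base_iff: "base E M B \<longleftrightarrow> M B \<and> B \<subseteq> E \<and> (\<forall>x\<in>E - B. \<not> M (insert x B))"
proof
  assume b: "base E M B"
  hence mb: "M B" "B \<subseteq> E" unfolding base_def maximal_in_def by auto
  moreover have "\<forall>x\<in>E - B. \<not> M (insert x B)"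
  proof (intro ballI notI)
    fix x assume x: "x \<in> E - B" and "M (insert x B)"
    moreover have "insert x B \<subseteq> E" using x mb by auto
    ultimately have "insert x B = B" using b unfolding base_def maximal_in_def by blast
    thus False using x by auto
  qed
  ultimately show "M B \<and> B \<subseteq> E \<and> (\<forall>x\<in>E - B. \<not> M (insert x B))" by auto
next
  assume a: "M B \<and> B \<subseteq> E \<and> (\<forall>x\<in>E - B. \<not> M (insert x B))"
  show "base E M B" unfolding base_def maximal_in_def
  proof (intro conjI ballI impI)
    show "B \<in> {I. I \<subseteq> E \<and> M I}" using a by auto
  next
    fix Y assume Y: "Y \<in> {I. I \<subseteq> E \<and> M I}" "B \<subseteq> Y"
    show "Y = B"
    proof (rule ccontr)
      assume "Y \<noteq> B"
      then obtain x where "x \<in> Y" "x \<notin> B" using Y by auto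
      hence "M (insert x B)" using Y m_mono[of Y "insert x B"] by auto
      thus False using a \<open>x \<in> Y\<close> \<open>x \<notin> B\<close> Y by auto
    qed
  qed
qed

lemma base_M: "base E M B \<Longrightarrow> M B" unfolding base_def maximal_in_def by blast
lemma base_E: "base E M B \<Longrightarrow> B \<subseteq> E" unfolding base_def maximal_in_def by blast

lemma ext_base: "M I \<Longrightarrow> \<exists>B. base E M B \<and> I \<subseteq> B"
proof -
  assume I: "M I"
  obtain J where J: "maximal_in {I'. M I' \<and> I \<subseteq> I' \<and> I' \<subseteq> E} J"
    using m_max[OF I m_sub[OF I]] by blast
  have "base E M J" unfolding base_iff
  proof (intro conjI ballI)
    show "M J" "J \<subseteq> E" using J unfolding maximal_in_def by auto
  next
    fix x assume x: "x \<in> E - J"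
    show "\<not> M (insert x J)"
    proof
      assume "M (insert x J)"
      hence "insert x J = J" using J x unfolding maximal_in_def by auto
      thus False using x by auto
    qed
  qed
  thus ?thesis using J unfolding maximal_in_def by auto
qed

lemma ext_mx: "M I \<Longrightarrow> I \<subseteq> X \<Longrightarrow> X \<subseteq> E \<Longrightarrow> \<exists>J. I \<subseteq> J \<and> mx M X J"
proof -
  assume a: "M I" "I \<subseteq> X" "X \<subseteq> E"
  obtain J where J: "maximal_in {I'. M I' \<and> I \<subseteq> I' \<and> I' \<subseteq> X} J"
    using m_max[OF a] by blast
  have "mx M X J" unfolding mx_def
  proof (intro conjI ballI)
    show "J \<subseteq> X" "M J" using J unfolding maximal_in_def by auto
  next
    fix y assume y: "y \<in> X - J"
    show "\<not> M (insert y J)"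
    proof
      assume "M (insert y J)"
      hence "insert y J = J" using J y unfolding maximal_in_def by auto
      thus False using y by auto
    qed
  qed
  thus ?thesis using J unfolding maximal_in_def by auto
qed

lemma exch_base:
  assumes b1: "base E M B1" and b2: "base E M B2" and x: "x \<in> B1 - B2"
  shows "\<exists>y\<in>B2 - B1. base E M (insert y (B1 - {x}))"
proof -
  have i: "M (B1 - {x})" using base_M[OF b1] m_mono by blast
  have nb: "\<not> base E M (B1 - {x})"
  proof
    assume "base E M (B1 - {x})"
    moreover have "x \<in> E - (B1 - {x})" using x base_E[OF b1] by auto
    ultimately have "\<not> M (insert x (B1 - {x}))" unfolding base_iff by blast
    moreover have "insert x (B1 - {x}) = B1" using x by auto
    ultimately show False using base_M[OF b1] by simp
  qed
  obtain y where y: "y \<in> B2 - (B1 - {x})" "M (insert y (B1 - {x}))"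
    using m_aug[OF i nb b2] by blast
  have yx: "y \<noteq> x" using x y by auto
  hence yB1: "y \<notin> B1" using y by auto
  have "base E M (insert y (B1 - {x}))"
  proof (rule ccontr)
    assume nb2: "\<not> base E M (insert y (B1 - {x}))"
    obtain z where z: "z \<in> B1 - insert y (B1 - {x})" "M (insert z (insert y (B1 - {x})))"
      using m_aug[OF y(2) nb2 b1] by blast
    have "z = x" using z by auto
    hence "insert z (insert y (B1 - {x})) = insert y B1" using x by auto
    hence "M (insert y B1)" using z by simp
    moreover have "y \<in> E - B1" using yB1 y base_E[OF b2] by auto
    ultimately show False using b1 unfolding base_iff by auto
  qed
  thus ?thesis using y yB1 by auto
qed

lemma L2_aux:
  "\<forall>B1. base E M B1 \<longrightarrow> finite (B1 - B2) \<longrightarrow> card (B1 - B2) = n \<longrightarrow> base E M B2 \<longrightarrow>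
     finite (B2 - B1) \<and> card (B2 - B1) = n"
proof (induction n)
  case 0
  show ?case
  proof (intro allI impI)
    fix B1 assume a: "base E M B1" "finite (B1 - B2)" "card (B1 - B2) = 0" "base E M B2"
    hence "B1 \<subseteq> B2" by auto
    hence "B2 = B1" using a(1) base_M[OF a(4)] base_E[OF a(4)]
      unfolding base_def maximal_in_def by auto
    thus "finite (B2 - B1) \<and> card (B2 - B1) = 0" by simp
  qed
next
  case (Suc n)
  show ?case
  proof (intro allI impI)
    fix B1 assume a: "base E M B1" "finite (B1 - B2)" "card (B1 - B2) = Suc n" "base E M B2"
    hence "B1 - B2 \<noteq> {}" by (metis card.empty nat.simps(3))
    then obtain x where x: "x \<in> B1 - B2" by blast
    obtain y where y: "y \<in> B2 - B1" "base E M (insert y (B1 - {x}))"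
      using exch_base[OF a(1) a(4) x] by blast
    let ?B = "insert y (B1 - {x})"
    have d1: "?B - B2 = (B1 - B2) - {x}" using y x by auto
    have "finite (?B - B2)" "card (?B - B2) = n" using d1 a(2,3) x by auto
    hence ih: "finite (B2 - ?B) \<and> card (B2 - ?B) = n" using Suc.IH y(2) a(4) by blast
    have d2: "B2 - ?B = (B2 - B1) - {y}" using x y by auto
    have "B2 - B1 = insert y (B2 - ?B)" using d2 y by auto
    moreover have "y \<notin> B2 - ?B" by auto
    ultimately show "finite (B2 - B1) \<and> card (B2 - B1) = Suc n" using ih
      by (metis card_insert_disjoint finite_insert)
  qed
qed

lemma L2: "base E M B1 \<Longrightarrow> base E M B2 \<Longrightarrow> finite (B1 - B2) \<Longrightarrow>
  finite (B2 - B1) \<and> card (B2 - B1) = card (B1 - B2)"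
  using L2_aux by blast

lemma L3:
  assumes X: "finite X" "X \<subseteq> E" and I: "mx M X I" and J: "J \<subseteq> X" "M J"
  shows "card J \<le> card I"
proof -
  obtain BJ where BJ: "base E M BJ" "J \<subseteq> BJ" using ext_base[OF J(2)] by blast
  have IM: "M I" "I \<subseteq> X" using I unfolding mx_def by auto
  obtain B2 where B2: "maximal_in {I'. M I' \<and> I \<subseteq> I' \<and> I' \<subseteq> I \<union> BJ} B2"
    using m_max[OF IM(1), of "I \<union> BJ"] IM X base_E[OF BJ(1)] by blast
  have B2p: "M B2" "I \<subseteq> B2" "B2 \<subseteq> I \<union> BJ" using B2 unfolding maximal_in_def by auto
  have bB2: "base E M B2"
  proof (rule ccontr)
    assume "\<not> base E M B2"
    then obtain z where z: "z \<in> BJ - B2" "M (insert z B2)" using m_aug[OF B2p(1) _ BJ(1)] by blast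
    hence "insert z B2 = B2" using B2 B2p unfolding maximal_in_def by auto
    thus False using z by auto
  qed
  have fI: "finite I" using IM X finite_subset by blast
  have "B2 - BJ \<subseteq> I" using B2p by auto
  hence "finite (B2 - BJ)" using fI finite_subset by blast
  then have L: "finite (BJ - B2) \<and> card (BJ - B2) = card (B2 - BJ)" using L2[OF bB2 BJ(1)] by blast
  have s1: "J - I \<subseteq> BJ - B2"
  proof
    fix x assume x: "x \<in> J - I"
    have "x \<notin> B2"
    proof
      assume "x \<in> B2"
      hence "M (insert x I)" using B2p m_mono by blast
      thus False using I x J unfolding mx_def by auto
    qed
    thus "x \<in> BJ - B2" using x BJ by auto
  qed
  have s2: "B2 - BJ \<subseteq> I - J" using B2p BJ by auto
  have c1: "card (J - I) \<le> card (BJ - B2)" using s1 L card_mono by blast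
  have c2: "card (B2 - BJ) \<le> card (I - J)" using s2 fI card_mono by blast
  have fJ: "finite J" using J X finite_subset by blast
  have "card J = card (J \<inter> I) + card (J - I)" using card_Int_Diff[OF fJ] .
  moreover have "card I = card (I \<inter> J) + card (I - J)" using card_Int_Diff[OF fI] .
  ultimately show ?thesis using c1 c2 L by (simp add: Int_commute)
qed

end



context
  fixes E :: "'a set" and M :: "'a set \<Rightarrow> bool"
  assumes fm: "finitary_matroid E M"
begin

lemma circ_fin: "circuit E M C \<Longrightarrow> finite C"
proof (rule ccontr)
  assume c: "circuit E M C" and inf: "infinite C"
  have "M C"
  proof (rule m_fin[OF fm])
    show "C \<subseteq> E" using c unfolding circuit_def by auto
  next
    fix F assume "F \<subseteq> C" "finite F"
    hence "F \<subset> C" using inf by auto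
    thus "M F" using c unfolding circuit_def by auto
  qed
  thus False using c unfolding circuit_def by auto
qed

lemma dep_circ:
  assumes X: "X \<subseteq> E" "\<not> M X"
  shows "\<exists>C\<subseteq>X. circuit E M C"
proof -
  obtain F where F: "F \<subseteq> X" "finite F" "\<not> M F"
    using m_fin[OF fm X(1)] X(2) by blast
  define S where "S = (\<lambda>G. G \<subseteq> F \<and> \<not> M G)"
  have "S F" using F S_def by auto
  define C where "C = arg_min card S"
  have C: "S C" "\<forall>y. S y \<longrightarrow> card C \<le> card y"
    using arg_min_nat_lemma[of S F card] \<open>S F\<close> unfolding C_def by auto
  have "circuit E M C" unfolding circuit_def
  proof (intro conjI allI impI)
    show "C \<subseteq> E" "\<not> M C" using C S_def F X by auto
  next
    fix D assume D: "D \<subset> C"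
    have "finite C" using C S_def F finite_subset by auto
    hence "card D < card C" using D psubset_card_mono by blast
    hence "\<not> S D" using C by fastforce
    thus "M D" using D C S_def by auto
  qed
  thus ?thesis using C S_def F by auto
qed

lemma weak_elim:
  assumes C: "circuit E M C" and D: "circuit E M D" and ne: "C \<noteq> D"
    and e: "e \<in> C" "e \<in> D"
  shows "\<not> M ((C \<union> D) - {e})"
proof
  assume I: "M ((C \<union> D) - {e})"
  let ?X = "C \<union> D"
  have fX: "finite ?X" using circ_fin C D by auto
  have XE: "?X \<subseteq> E" using C D unfolding circuit_def by auto
  have CnD: "\<not> C \<subseteq> D"
  proof
    assume "C \<subseteq> D" hence "C \<subset> D" using ne by auto
    thus False using C D unfolding circuit_def by auto
  qed
  have DnC: "\<not> D \<subseteq> C"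
  proof
    assume "D \<subseteq> C" hence "D \<subset> C" using ne by auto
    thus False using C D unfolding circuit_def by auto
  qed
  have "C \<inter> D \<subset> C" using CnD by auto
  hence iCD: "M (C \<inter> D)" using C unfolding circuit_def by auto
  obtain J where J: "C \<inter> D \<subseteq> J" "mx M ?X J" using ext_mx[OF fm iCD _ XE] by blast
  have MJ: "M J" "J \<subseteq> ?X" using J unfolding mx_def by auto
  have "\<not> C \<subseteq> J"
  proof
    assume "C \<subseteq> J" hence "M C" using MJ(1) m_mono[OF fm, of J C] by simp
    thus False using C unfolding circuit_def by simp
  qed
  then obtain a where a: "a \<in> C" "a \<notin> J" by auto
  have "\<not> D \<subseteq> J"
  proof
    assume "D \<subseteq> J" hence "M D" using MJ(1) m_mono[OF fm, of J D] by simp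
    thus False using D unfolding circuit_def by simp
  qed
  then obtain b where b: "b \<in> D" "b \<notin> J" by auto
  have aD: "a \<notin> D" using a J by auto
  have ab: "a \<noteq> b" using aD b by auto
  have JX: "J \<subseteq> ?X - {a, b}" using MJ a b by auto
  have "card J \<le> card (?X - {a,b})" using card_mono[OF _ JX] fX by simp
  also have "\<dots> = card ?X - 2"
  proof -
    have s: "{a,b} \<subseteq> ?X" using a b by auto
    have "card (?X - {a,b}) = card ?X - card {a,b}" using card_Diff_subset[OF _ s] by simp
    thus ?thesis using ab by simp
  qed
  finally have c1: "card J \<le> card ?X - 2" .
  have "card (?X - {e}) \<le> card J" using L3[OF fm fX XE J(2) Diff_subset I] .
  moreover have "card (?X - {e}) = card ?X - 1" using e fX by simp
  moreover have "card ?X \<ge> 2"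
  proof -
    have "{a, b} \<subseteq> ?X" using a b by auto
    hence "card {a,b} \<le> card ?X" using card_mono[OF fX] by blast
    thus ?thesis using ab by simp
  qed
  ultimately show False using c1 by linarith
qed

lemma fc_props:
  assumes B: "base E M B" and e: "e \<in> E - B"
  shows "circuit E M (fcirc E M e B) \<and> fcirc E M e B \<subseteq> insert e B \<and> e \<in> fcirc E M e B
    \<and> (\<forall>C. circuit E M C \<and> C \<subseteq> insert e B \<longrightarrow> C = fcirc E M e B)"
proof -
  have BE: "B \<subseteq> E" using base_E[OF fm B] .
  have MB: "M B" using base_M[OF fm B] .
  have XE: "insert e B \<subseteq> E" using e BE by blast
  have nd: "\<not> M (insert e B)" using B e unfolding base_iff[OF fm] by blast
  obtain C0 where C0: "C0 \<subseteq> insert e B" "circuit E M C0" using dep_circ[OF XE nd] by blast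
  have ine: "e \<in> C" if c: "circuit E M C" "C \<subseteq> insert e B" for C
  proof (rule ccontr)
    assume "e \<notin> C"
    hence "C \<subseteq> B" using c(2) by blast
    hence "M C" using m_mono[OF fm MB] by blast
    thus False using c(1) unfolding circuit_def by blast
  qed
  have uq: "C = C0" if c: "circuit E M C" "C \<subseteq> insert e B" for C
  proof (rule ccontr)
    assume c3: "C \<noteq> C0"
    have "\<not> M ((C \<union> C0) - {e})" using weak_elim[OF c(1) C0(2) c3 ine[OF c(1,2)] ine[OF C0(2,1)]] .
    moreover have "(C \<union> C0) - {e} \<subseteq> B" using c(2) C0(1) by blast
    ultimately show False using m_mono[OF fm MB] by blast
  qed
  have fc: "fcirc E M e B = C0" unfolding fcirc_def
  proof (rule the_equality)
    show "circuit E M C0 \<and> C0 \<subseteq> insert e B" using C0 by blast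
  next
    fix C assume "circuit E M C \<and> C \<subseteq> insert e B"
    thus "C = C0" using uq by blast
  qed
  have e0: "e \<in> C0" using ine[OF C0(2,1)] .
  have u0: "\<forall>C. circuit E M C \<and> C \<subseteq> insert e B \<longrightarrow> C = C0" using uq by blast
  show ?thesis unfolding fc using C0 e0 u0 by (intro conjI)
qed

lemma fc_exch:
  assumes B: "base E M B" and e: "e \<in> E - B" and f: "f \<in> fcirc E M e B" "f \<noteq> e"
  shows "base E M (insert e (B - {f}))"
proof -
  note fp = fc_props[OF B e]
  have fB: "f \<in> B" using fp f by auto
  have ind: "M (insert e (B - {f}))"
  proof (rule ccontr)
    assume "\<not> M (insert e (B - {f}))"
    moreover have "insert e (B - {f}) \<subseteq> E" using e base_E[OF fm B] by auto
    ultimately obtain D where D: "D \<subseteq> insert e (B - {f})" "circuit E M D" using dep_circ by blast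
    hence "D = fcirc E M e B" using fp by auto
    thus False using D f by auto
  qed
  show ?thesis
  proof (rule ccontr)
    assume nb: "\<not> base E M (insert e (B - {f}))"
    obtain z where z: "z \<in> B - insert e (B - {f})" "M (insert z (insert e (B - {f})))"
      using m_aug[OF fm ind nb B] by blast
    have "z = f" using z by auto
    hence "insert z (insert e (B - {f})) = insert e B" using fB by auto
    hence "M (insert e B)" using z by simp
    thus False using B e unfolding base_iff[OF fm] by auto
  qed
qed

lemma fc_iff:
  assumes B: "base E M B" and e: "e \<in> E - B" and f: "f \<in> B"
  shows "f \<in> fcirc E M e B \<longleftrightarrow> M (insert e (B - {f}))"
proof
  assume "f \<in> fcirc E M e B"
  moreover have "f \<noteq> e" using f e by auto
  ultimately show "M (insert e (B - {f}))" using fc_exch[OF B e] base_M[OF fm] by blast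
next
  assume m: "M (insert e (B - {f}))"
  show "f \<in> fcirc E M e B"
  proof (rule ccontr)
    assume "f \<notin> fcirc E M e B"
    hence "fcirc E M e B \<subseteq> insert e (B - {f})" using fc_props[OF B e] by auto
    hence "M (fcirc E M e B)" using m m_mono[OF fm] by blast
    moreover have "\<not> M (fcirc E M e B)" using fc_props[OF B e] unfolding circuit_def by blast
    ultimately show False by blast
  qed
qed

lemma CL:
  assumes Y: "M Y" and W: "finite W" "W \<subseteq> E" "\<forall>w\<in>W. \<not> M (insert w Y)"
    and C: "circuit E M C" "x \<in> C" "C \<subseteq> Y \<union> W \<union> {x}" and xY: "x \<notin> Y"
  shows "\<not> M (insert x Y)"
proof
  assume Mx: "M (insert x Y)"
  have xW: "x \<notin> W" using Mx W(3) by blast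
  have YE: "Y \<subseteq> E" using m_sub[OF fm Y] .
  have "\<forall>w\<in>W. \<exists>D. circuit E M D \<and> D \<subseteq> insert w Y"
  proof
    fix w assume w: "w \<in> W"
    have "insert w Y \<subseteq> E" using w W YE by auto
    thus "\<exists>D. circuit E M D \<and> D \<subseteq> insert w Y" using dep_circ W w by blast
  qed
  hence "\<exists>Dm. \<forall>w\<in>W. circuit E M (Dm w) \<and> Dm w \<subseteq> insert w Y" by (rule bchoice)
  then obtain Dm where Dm: "\<forall>w\<in>W. circuit E M (Dm w) \<and> Dm w \<subseteq> insert w Y" by blast
  define Y' where "Y' = Y \<inter> (C \<union> \<Union>(Dm ` W))"
  have "\<forall>w\<in>W. finite (Dm w)" using Dm circ_fin by blast
  hence "finite (C \<union> \<Union>(Dm ` W))" using circ_fin[OF C(1)] W(1) by blast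
  hence fY': "finite Y'" unfolding Y'_def by blast
  have Y'Y: "Y' \<subseteq> Y" unfolding Y'_def by auto
  have MY': "M Y'" using m_mono[OF fm Y Y'Y] .
  let ?X = "Y' \<union> W"
  have fX: "finite ?X" using fY' W by auto
  have XE: "?X \<subseteq> E" using Y'Y YE W by auto
  have mxY': "mx M ?X Y'" unfolding mx_def
  proof (intro conjI ballI)
    show "Y' \<subseteq> ?X" "M Y'" using MY' by auto
  next
    fix y assume y: "y \<in> ?X - Y'"
    hence yW: "y \<in> W" by auto
    have "Dm y \<subseteq> insert y Y'" using Dm yW unfolding Y'_def by auto
    thus "\<not> M (insert y Y')" using Dm yW m_mono[OF fm] unfolding circuit_def by blast
  qed
  have Cx: "C - {x} \<subseteq> ?X" using C unfolding Y'_def by auto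
  have MCx: "M (C - {x})" using C unfolding circuit_def by auto
  obtain K where K: "C - {x} \<subseteq> K" "mx M ?X K" using ext_mx[OF fm MCx Cx XE] by blast
  have cK: "card K \<le> card Y'" using L3[OF fm fX XE mxY'] K(2) unfolding mx_def by auto
  let ?X2 = "insert x ?X"
  have xY': "x \<notin> Y'" using xY Y'Y by auto
  have mxK: "mx M ?X2 K" unfolding mx_def
  proof (intro conjI ballI)
    show "K \<subseteq> ?X2" "M K" using K unfolding mx_def by auto
  next
    fix y assume y: "y \<in> ?X2 - K"
    show "\<not> M (insert y K)"
    proof (cases "y = x")
      case True
      hence "C \<subseteq> insert y K" using K by auto
      moreover have "\<not> M C" using C(1) unfolding circuit_def by blast
      ultimately show ?thesis using m_mono[OF fm, of "insert y K" C] by blast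
    next
      case False
      thus ?thesis using y K unfolding mx_def by auto
    qed
  qed
  have s3: "insert x Y' \<subseteq> ?X2" by auto
  have m3: "M (insert x Y')" using m_mono[OF fm Mx] Y'Y by blast
  have "x \<in> E" using C(1,2) unfolding circuit_def by blast
  hence "?X2 \<subseteq> E" using XE by blast
  hence "card (insert x Y') \<le> card K"
    using L3[OF fm _ _ mxK s3 m3] fX by blast
  thus False using cK xY' fY' by simp
qed

end



lemma fin_exch:
  assumes fm: "finitary_matroid E M"
  shows "finite K' \<Longrightarrow> \<forall>B. base E M B
    \<and> (\<forall>k\<in>K'. t k \<in> E - B \<and> h k \<in> fcirc E M (t k) B \<and> h k \<noteq> t k)
    \<and> (\<forall>k\<in>K'. \<forall>k'\<in>K'. k < k' \<longrightarrow> h k' \<notin> fcirc E M (t k) B)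
    \<longrightarrow> base E M ((B \<union> t ` K') - h ` (K'::'k::linorder set))"
proof (induction "card K'" arbitrary: K')
  case 0
  hence "K' = {}" by simp
  thus ?case by simp
next
  case (Suc n)
  show ?case
  proof (intro allI impI)
    fix B assume a: "base E M B
    \<and> (\<forall>k\<in>K'. t k \<in> E - B \<and> h k \<in> fcirc E M (t k) B \<and> h k \<noteq> t k)
    \<and> (\<forall>k\<in>K'. \<forall>k'\<in>K'. k < k' \<longrightarrow> h k' \<notin> fcirc E M (t k) B)"
    have B: "base E M B" using a by blast
    have A1: "\<forall>k\<in>K'. t k \<in> E - B \<and> h k \<in> fcirc E M (t k) B \<and> h k \<noteq> t k" using a by blast
    have A2: "\<forall>k\<in>K'. \<forall>k'\<in>K'. k < k' \<longrightarrow> h k' \<notin> fcirc E M (t k) B" using a by blast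
    have ne: "K' \<noteq> {}" using Suc.hyps(2) by auto
    define m where "m = Max K'"
    have mK: "m \<in> K'" unfolding m_def using Max_in[OF Suc.prems ne] .
    define K0 where "K0 = K' - {m}"
    have fK0: "finite K0" using Suc.prems K0_def by simp
    have cK0: "n = card K0" using Suc.hyps(2) mK Suc.prems unfolding K0_def by simp
    have lt: "k < m" if "k \<in> K0" for k
    proof -
      have "k \<le> m" using that Suc.prems unfolding m_def K0_def by simp
      moreover have "k \<noteq> m" using that K0_def by blast
      ultimately show ?thesis by simp
    qed
    have hB: "h k \<in> B" if "k \<in> K'" for k
      using that A1 fc_props[OF fm B, of "t k"] by blast
    have tB: "t k \<notin> B" if "k \<in> K'" for k using that A1 by blast
    define B1 where "B1 = insert (t m) (B - {h m})"
    have B1: "base E M B1" unfolding B1_def using fc_exch[OF fm B] A1 mK by blast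
    have fc_eq: "fcirc E M (t k) B1 = fcirc E M (t k) B" if k: "k \<in> K0" for k
    proof -
      have kK: "k \<in> K'" using k K0_def by blast
      note fp = fc_props[OF fm B, of "t k"]
      have C: "circuit E M (fcirc E M (t k) B)" "fcirc E M (t k) B \<subseteq> insert (t k) B"
        using fp A1 kK by blast+
      have hm: "h m \<notin> fcirc E M (t k) B" using A2 kK mK lt[OF k] by blast
      have tkm: "t k \<noteq> t m"
      proof
        assume "t k = t m"
        hence "h m \<in> fcirc E M (t k) B" using A1 mK by simp
        thus False using hm by blast
      qed
      have tk: "t k \<in> E - B1" using A1 kK tkm unfolding B1_def by blast
      have "fcirc E M (t k) B \<subseteq> insert (t k) B1" using C(2) hm unfolding B1_def by blast
      thus ?thesis using fc_props[OF fm B1 tk] C(1) by metis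
    qed
    have c1: "\<forall>k\<in>K0. t k \<in> E - B1 \<and> h k \<in> fcirc E M (t k) B1 \<and> h k \<noteq> t k"
    proof
      fix k assume k: "k \<in> K0"
      have kK: "k \<in> K'" using k K0_def by blast
      have tkm: "t k \<noteq> t m"
      proof
        assume "t k = t m"
        hence "h m \<in> fcirc E M (t k) B" using A1 mK by simp
        thus False using A2 kK mK lt[OF k] by blast
      qed
      show "t k \<in> E - B1 \<and> h k \<in> fcirc E M (t k) B1 \<and> h k \<noteq> t k"
        using A1 kK tkm fc_eq[OF k] unfolding B1_def by auto
    qed
    have c2: "\<forall>k\<in>K0. \<forall>k'\<in>K0. k < k' \<longrightarrow> h k' \<notin> fcirc E M (t k) B1"
      using A2 fc_eq unfolding K0_def by auto
    have ih: "base E M ((B1 \<union> t ` K0) - h ` K0)"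
      using Suc.hyps(1)[OF cK0 fK0] B1 c1 c2 by blast
    have "(B1 \<union> t ` K0) - h ` K0 = (B \<union> t ` K') - h ` K'"
    proof -
      have K': "K' = insert m K0" using mK K0_def by blast
      have hm: "h m \<in> B" "t m \<notin> B" using hB tB mK by blast+
      have h0: "\<forall>k\<in>K0. h k \<in> B \<and> t k \<notin> B" using hB tB K' by blast
      show ?thesis unfolding K' B1_def using hm h0 by auto
    qed
    thus "base E M ((B \<union> t ` K') - h ` K')" using ih by simp
  qed
qed

context
  fixes E :: "'a set" and M :: "'a set \<Rightarrow> bool" and B :: "'a set"
    and K :: "'k::wellorder set" and t h :: "'k \<Rightarrow> 'a"
  assumes fm: "finitary_matroid E M" and B: "base E M B"
    and A1: "\<forall>k\<in>K. t k \<in> E - B \<and> h k \<in> fcirc E M (t k) B \<and> h k \<noteq> t k"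
    and A2: "\<forall>k\<in>K. \<forall>k'\<in>K. k < k' \<longrightarrow> h k' \<notin> fcirc E M (t k) B"
begin

lemma hB: "k \<in> K \<Longrightarrow> h k \<in> B"
  using A1 fc_props[OF fm B, of "t k"] by blast

lemma tB: "k \<in> K \<Longrightarrow> t k \<notin> B" using A1 by blast

lemma fcK: "k \<in> K \<Longrightarrow> circuit E M (fcirc E M (t k) B) \<and> fcirc E M (t k) B \<subseteq> insert (t k) B
   \<and> t k \<in> fcirc E M (t k) B"
  using A1 fc_props[OF fm B, of "t k"] by blast

lemma indep_new: "M ((B \<union> t ` K) - h ` K)"
proof (rule m_fin[OF fm])
  show "(B \<union> t ` K) - h ` K \<subseteq> E" using base_E[OF fm B] A1 by blast
next
  fix F assume F: "F \<subseteq> (B \<union> t ` K) - h ` K" "finite F"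
  have "F \<inter> t ` K \<subseteq> t ` K" by blast
  then obtain K' where K': "K' \<subseteq> K" "finite K'" "F \<inter> t ` K = t ` K'"
    using finite_subset_image[of "F \<inter> t ` K" t K] F(2) by blast
  have "base E M ((B \<union> t ` K') - h ` K')"
  proof -
    have c1: "\<forall>k\<in>K'. t k \<in> E - B \<and> h k \<in> fcirc E M (t k) B \<and> h k \<noteq> t k"
      using A1 K'(1) by blast
    have c2: "\<forall>k\<in>K'. \<forall>k'\<in>K'. k < k' \<longrightarrow> h k' \<notin> fcirc E M (t k) B"
      using A2 K'(1) by blast
    show ?thesis using fin_exch[OF fm K'(2)] B c1 c2 by blast
  qed
  moreover have "F \<subseteq> (B \<union> t ` K') - h ` K'" using F K' by blast
  ultimately show "M F" using base_M[OF fm] m_mono[OF fm] by blast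
qed

lemma lemM:
  assumes Y: "M Y" and YC: "\<forall>k\<in>K. fcirc E M (t k) B - h ` K \<subseteq> Y"
  shows "k \<in> K \<Longrightarrow> h k \<notin> Y \<Longrightarrow> \<not> M (insert (h k) Y)"
proof (induction k rule: less_induct)
  case (less k)
  define C where "C = fcirc E M (t k) B"
  have C: "circuit E M C" "C \<subseteq> insert (t k) B" using fcK[OF less.prems(1)] C_def by blast+
  have hk: "h k \<in> C" using A1 less.prems C_def by blast
  define W where "W = (C - Y) - {h k}"
  have fW: "finite W" using circ_fin[OF fm C(1)] W_def by simp
  have WE: "W \<subseteq> E" using C(1) W_def unfolding circuit_def by blast
  have Wd: "\<forall>w\<in>W. \<not> M (insert w Y)"
  proof
    fix w assume w: "w \<in> W"
    have "w \<in> h ` K" using w YC less.prems(1) unfolding W_def C_def by blast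
    then obtain j where j: "j \<in> K" "w = h j" by blast
    have "\<not> k < j" using A2 less.prems(1) j w unfolding W_def C_def by blast
    moreover have "j \<noteq> k" using j w W_def by blast
    ultimately have "j < k" by simp
    moreover have "h j \<notin> Y" using j w W_def by blast
    ultimately show "\<not> M (insert w Y)" using less.IH j by blast
  qed
  have "C \<subseteq> Y \<union> W \<union> {h k}" unfolding W_def by blast
  thus ?case using CL[OF fm Y fW WE Wd C(1) hk] less.prems(2) by blast
qed

lemma base_new: "base E M ((B \<union> t ` K) - h ` K)"
proof (rule ccontr)
  let ?B' = "(B \<union> t ` K) - h ` K"
  assume nb: "\<not> base E M ?B'"
  obtain x where x: "x \<in> B - ?B'" "M (insert x ?B')"
    using m_aug[OF fm indep_new nb B] by blast
  then obtain k where k: "k \<in> K" "x = h k" by blast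
  have yc: "\<forall>k\<in>K. fcirc E M (t k) B - h ` K \<subseteq> ?B'" using fcK by blast
  have "h k \<notin> ?B'" using k by blast
  hence "\<not> M (insert (h k) ?B')" using lemM[OF indep_new yc k(1)] by blast
  thus False using x k by simp
qed

end




lemma fc_transfer:
  assumes fm: "finitary_matroid E M" and B: "base E M B" and B2: "base E M B2"
    and x: "x \<in> E - B" "x \<in> E - B2"
    and sub: "fcirc E M x B \<subseteq> insert x B2"
  shows "fcirc E M x B2 = fcirc E M x B"
proof -
  have "circuit E M (fcirc E M x B)" using fc_props[OF fm B x(1)] by blast
  thus ?thesis using fc_props[OF fm B2 x(2)] sub by blast
qed

lemma induced_new:
  fixes K :: "'k::wellorder set"
  assumes fm: "finitary_matroid E M" and B: "base E M B"
    and A1: "\<forall>k\<in>K. t k \<in> E - B \<and> h k \<in> fcirc E M (t k) B \<and> h k \<noteq> t k"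
    and A2: "\<forall>k\<in>K. \<forall>k'\<in>K. k < k' \<longrightarrow> h k' \<notin> fcirc E M (t k) B"
    and U: "\<forall>k\<in>K. fcirc E M (t k) B \<subseteq> U"
  shows "induced (Dig E M ((B \<union> t ` K) - h ` K)) (E - U) = induced (Dig E M B) (E - U)"
proof -
  define B' where "B' = (B \<union> t ` K) - h ` K"
  have bB': "base E M B'" unfolding B'_def using base_new[OF fm B A1 A2] .
  have MB': "M B'" using base_M[OF fm bB'] .
  have tU: "t k \<in> U" "h k \<in> U" if "k \<in> K" for k
    using fcK[OF fm B A1 A2 that] A1 U that by blast+
  have inB: "x \<in> B' \<longleftrightarrow> x \<in> B" if "x \<notin> U" for x
    using that tU unfolding B'_def by blast
  have key: "f \<in> fcirc E M e B \<longleftrightarrow> f \<in> fcirc E M e B'"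
    if e: "e \<in> E - B" "e \<notin> U" and f: "f \<in> B" "f \<notin> U" for e f
  proof
    assume fc: "f \<in> fcirc E M e B"
    define Bf where "Bf = insert e (B - {f})"
    have fe: "f \<noteq> e" using e f by blast
    have bBf: "base E M Bf" unfolding Bf_def using fc_exch[OF fm B e(1) fc fe] .
    have te: "t k \<noteq> e" if "k \<in> K" for k using tU that e by blast
    have fnot: "f \<notin> fcirc E M (t k) B" if "k \<in> K" for k using U that f by blast
    have eqc: "fcirc E M (t k) Bf = fcirc E M (t k) B" if k: "k \<in> K" for k
    proof (rule fc_transfer[OF fm B bBf])
      show "t k \<in> E - B" using A1 k by blast
      show "t k \<in> E - Bf" using A1 k te[OF k] unfolding Bf_def by blast
      show "fcirc E M (t k) B \<subseteq> insert (t k) Bf"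
        using fcK[OF fm B A1 A2 k] fnot[OF k] unfolding Bf_def by blast
    qed
    have A1': "\<forall>k\<in>K. t k \<in> E - Bf \<and> h k \<in> fcirc E M (t k) Bf \<and> h k \<noteq> t k"
    proof
      fix k assume k: "k \<in> K"
      show "t k \<in> E - Bf \<and> h k \<in> fcirc E M (t k) Bf \<and> h k \<noteq> t k"
        using A1 k te[OF k] eqc[OF k] unfolding Bf_def by auto
    qed
    have A2': "\<forall>k\<in>K. \<forall>k'\<in>K. k < k' \<longrightarrow> h k' \<notin> fcirc E M (t k) Bf"
      using A2 eqc by simp
    have "base E M ((Bf \<union> t ` K) - h ` K)" using base_new[OF fm bBf A1' A2'] .
    moreover have "(Bf \<union> t ` K) - h ` K = insert e (B' - {f})"
      unfolding Bf_def B'_def using e f tU by blast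
    ultimately have "M (insert e (B' - {f}))" using base_M[OF fm] by simp
    moreover have "e \<in> E - B'" using e inB by blast
    moreover have "f \<in> B'" using f inB by blast
    ultimately show "f \<in> fcirc E M e B'" using fc_iff[OF fm bB'] by blast
  next
    assume fc': "f \<in> fcirc E M e B'"
    show "f \<in> fcirc E M e B"
    proof (rule ccontr)
      assume nf: "f \<notin> fcirc E M e B"
      define Y where "Y = B' - {f}"
      have MY: "M Y" using m_mono[OF fm MB'] Y_def by blast
      define W where "W = fcirc E M e B \<inter> h ` K"
      note fpe = fc_props[OF fm B e(1)]
      have fW: "finite W" using circ_fin[OF fm] fpe W_def by blast
      have WE: "W \<subseteq> E" using fpe W_def unfolding circuit_def by blast
      have YC: "\<forall>k\<in>K. fcirc E M (t k) B - h ` K \<subseteq> Y"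
      proof
        fix k assume k: "k \<in> K"
        have "f \<notin> fcirc E M (t k) B" using U k f by blast
        thus "fcirc E M (t k) B - h ` K \<subseteq> Y"
          using fcK[OF fm B A1 A2 k] k unfolding Y_def B'_def by blast
      qed
      have Wd: "\<forall>w\<in>W. \<not> M (insert w Y)"
      proof
        fix w assume w: "w \<in> W"
        then obtain k where k: "k \<in> K" "w = h k" unfolding W_def by blast
        have "h k \<notin> Y" using k unfolding Y_def B'_def by blast
        thus "\<not> M (insert w Y)" using lemM[OF fm B A1 A2 MY YC k(1)] k by blast
      qed
      have Csub: "fcirc E M e B \<subseteq> Y \<union> W \<union> {e}"
        using fpe nf unfolding Y_def W_def B'_def by blast
      have eY: "e \<notin> Y" using e inB unfolding Y_def by blast
      have "\<not> M (insert e Y)" using CL[OF fm MY fW WE Wd _ _ Csub eY] fpe by blast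
      moreover have "M (insert e Y)"
      proof -
        have "e \<in> E - B'" using e inB by blast
        moreover have "f \<in> B'" using f inB by blast
        ultimately show ?thesis using fc_iff[OF fm bB'] fc' Y_def by blast
      qed
      ultimately show False by blast
    qed
  qed
  have "induced (Dig E M B') (E - U) = induced (Dig E M B) (E - U)"
  proof (rule set_eqI)
    fix p :: "'a \<times> 'a"
    obtain e f where p: "p = (e, f)" by (cases p)
    show "p \<in> induced (Dig E M B') (E - U) \<longleftrightarrow> p \<in> induced (Dig E M B) (E - U)"
    proof (cases "e \<in> E - U \<and> f \<in> E - U")
      case False
      thus ?thesis unfolding p induced_def by blast
    next
      case True
      have eq1: "e \<in> B' \<longleftrightarrow> e \<in> B" "f \<in> B' \<longleftrightarrow> f \<in> B" using True inB by blast+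
      have "(e, f) \<in> Dig E M B' \<longleftrightarrow> (e, f) \<in> Dig E M B"
      proof (cases "e \<in> B")
        case True
        thus ?thesis using eq1 unfolding Dig_def by blast
      next
        case eB: False
        hence eE: "e \<in> E - B" "e \<in> E - B'" using True eq1 by blast+
        show ?thesis
        proof (cases "f \<in> B")
          case fB: True
          have "f \<noteq> e" using fB eB by blast
          thus ?thesis using key[OF eE(1) _ fB] True eE unfolding Dig_def by blast
        next
          case fB: False
          have "f \<notin> fcirc E M e B - {e}" using fB fc_props[OF fm B eE(1)] by blast
          moreover have "f \<notin> fcirc E M e B' - {e}" using fB eq1 fc_props[OF fm bB' eE(2)] by blast
          ultimately show ?thesis unfolding Dig_def by blast
        qed
      qed
      thus ?thesis unfolding p induced_def using True by blast
    qed
  qed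
  thus ?thesis unfolding B'_def .
qed




lemma arcs_mem: "(e,f) \<in> arcs p \<longleftrightarrow> (\<exists>i. Suc i < length p \<and> e = p!i \<and> f = p!Suc i)"
  unfolding arcs_def by blast

lemma not_arc:
  assumes d: "distinct p" and ij: "Suc j < length p" "i < length p" "i \<noteq> j"
  shows "(p ! i, p ! Suc j) \<notin> arcs p"
proof
  assume "(p ! i, p ! Suc j) \<in> arcs p"
  then obtain l where l: "Suc l < length p" "p ! i = p ! l" "p ! Suc j = p ! Suc l"
    unfolding arcs_mem by blast
  have "i = l" using l d ij nth_eq_iff_index_eq by (metis Suc_lessD)
  moreover have "Suc j = Suc l" using l d ij nth_eq_iff_index_eq by metis
  ultimately show False using ij by simp
qed

theorem lemma3p7:
  fixes E :: "'a set" and M N :: "'a set \<Rightarrow> bool" and BM BN :: "'a set"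
    and P :: "'i::wellorder \<Rightarrow> 'a list" and xi :: "'i"
  assumes "finitary_matroid E M" and "finitary_matroid E N"
    and "base E M BM" and "base E N BN"
    and paths: "\<forall>\<alpha><xi. is_path (Db E M N BM BN) (P \<alpha>)
                   \<and> (\<forall>a. \<not> shortcut (Db E M N BM BN) (P \<alpha>) a)"
    and disj: "\<forall>\<alpha><xi. \<forall>\<beta><\<alpha>. \<forall>a\<in>arcs (P \<beta>). \<forall>C\<in>escorts E M N BM BN a.
                   set (P \<alpha>) \<inter> C = {}"
  defines "BMxi \<equiv> (BM \<union> {e. \<exists>f. (e,f) \<in> (\<Union>\<alpha>\<in>{..<xi}. arcs (P \<alpha>)) \<inter> Dig E M BM})
                  - {f. \<exists>e. (e,f) \<in> (\<Union>\<alpha>\<in>{..<xi}. arcs (P \<alpha>)) \<inter> Dig E M BM}"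
    and "BNxi \<equiv> (BN \<union> {f. \<exists>e. (e,f) \<in> (\<Union>\<alpha>\<in>{..<xi}. arcs (P \<alpha>)) \<inter> (Dig E N BN)\<inverse>})
                  - {e. \<exists>f. (e,f) \<in> (\<Union>\<alpha>\<in>{..<xi}. arcs (P \<alpha>)) \<inter> (Dig E N BN)\<inverse>}"
    and "U \<equiv> (\<Union>\<alpha>\<in>{..<xi}. \<Union>a\<in>arcs (P \<alpha>). \<Union>(escorts E M N BM BN a))"
  shows "base E M BMxi \<and> base E N BNxi
         \<and> induced (Dig E M BMxi) (E - U) = induced (Dig E M BM) (E - U)
         \<and> induced (Dig E N BNxi) (E - U) = induced (Dig E N BN) (E - U)"
proof -
  note fmM = assms(1) and fmN = assms(2) and bM = assms(3) and bN = assms(4)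
  let ?A = "\<Union>\<alpha>\<in>{..<xi}. arcs (P \<alpha>)"
  have dist: "distinct (P \<alpha>)" if "\<alpha> < xi" for \<alpha> using paths that unfolding is_path_def by blast
  have nosc: "\<not> shortcut (Db E M N BM BN) (P \<alpha>) a" if "\<alpha> < xi" for \<alpha> a using paths that by blast
  have disj': "set (P \<beta>) \<inter> C = {}"
    if "\<alpha> < \<beta>" "\<beta> < xi" "a \<in> arcs (P \<alpha>)" "C \<in> escorts E M N BM BN a" for \<alpha> \<beta> a C
    using disj that by blast
  have escU: "C \<subseteq> U" if "\<alpha> < xi" "a \<in> arcs (P \<alpha>)" "C \<in> escorts E M N BM BN a" for \<alpha> a C
    using that unfolding U_def by blast
  have nthset: "P \<alpha> ! j \<in> set (P \<alpha>)" if "j < length (P \<alpha>)" for \<alpha> j using that by simp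
  define KM where "KM = {(\<alpha>, i). \<alpha> < xi \<and> Suc i < length (P \<alpha>) \<and> (P \<alpha> ! i, P \<alpha> ! Suc i) \<in> Dig E M BM}"
  define tM where "tM = (\<lambda>(\<alpha>::'i, i::nat). P \<alpha> ! i)"
  define hM where "hM = (\<lambda>(\<alpha>::'i, i::nat). P \<alpha> ! Suc i)"
  have A1M: "\<forall>k\<in>KM. tM k \<in> E - BM \<and> hM k \<in> fcirc E M (tM k) BM \<and> hM k \<noteq> tM k"
    unfolding KM_def tM_def hM_def Dig_def by auto
  have A2M: "\<forall>k\<in>KM. \<forall>k'\<in>KM. k < k' \<longrightarrow> hM k' \<notin> fcirc E M (tM k) BM"
  proof (intro ballI impI)
    fix k k' assume k: "k \<in> KM" and k': "k' \<in> KM" and lt: "k < k'"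
    obtain \<alpha> i where ai: "k = (\<alpha>, i)" by (cases k)
    obtain \<beta> j where bj: "k' = (\<beta>, j)" by (cases k')
    have k1: "\<alpha> < xi" "Suc i < length (P \<alpha>)" "(P \<alpha> ! i, P \<alpha> ! Suc i) \<in> Dig E M BM"
      using k ai KM_def by auto
    have k2: "\<beta> < xi" "Suc j < length (P \<beta>)" "(P \<beta> ! j, P \<beta> ! Suc j) \<in> Dig E M BM"
      using k' bj KM_def by auto
    have arc: "(P \<alpha> ! i, P \<alpha> ! Suc i) \<in> arcs (P \<alpha>)" unfolding arcs_mem using k1(2) by blast
    have esc: "fcirc E M (P \<alpha> ! i) BM \<in> escorts E M N BM BN (P \<alpha> ! i, P \<alpha> ! Suc i)"
      using k1 unfolding escorts_def by auto
    show "hM k' \<notin> fcirc E M (tM k) BM"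
    proof (cases "\<alpha> < \<beta>")
      case True
      have "P \<beta> ! Suc j \<in> set (P \<beta>)" using k2 by simp
      thus ?thesis using disj'[OF True k2(1) arc esc] unfolding ai bj tM_def hM_def by auto
    next
      case False
      hence ab: "\<alpha> = \<beta>" "i < j" using lt ai bj by auto
      show ?thesis
      proof
        assume "hM k' \<in> fcirc E M (tM k) BM"
        hence inC: "P \<alpha> ! Suc j \<in> fcirc E M (P \<alpha> ! i) BM" unfolding ai bj tM_def hM_def ab by simp
        have ne: "P \<alpha> ! Suc j \<noteq> P \<alpha> ! i"
          using dist[OF k1(1)] k2(2) ab nth_eq_iff_index_eq by (metis Suc_lessD less_irrefl less_trans not_less_eq)
        have "(P \<alpha> ! i, P \<alpha> ! Suc j) \<in> Db E M N BM BN"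
          using k1(3) inC ne unfolding Db_def Dig_def by auto
        moreover have "(P \<alpha> ! i, P \<alpha> ! Suc j) \<notin> arcs (P \<alpha>)"
          using not_arc[OF dist[OF k1(1)]] k2(2) ab k1(2) by simp
        moreover have "i < Suc j" "Suc j < length (P \<alpha>)" using ab k2(2) by auto
        ultimately have "shortcut (Db E M N BM BN) (P \<alpha>) (P \<alpha> ! i, P \<alpha> ! Suc j)"
          unfolding shortcut_def by blast
        thus False using nosc[OF k1(1)] by blast
      qed
    qed
  qed
  have setM1: "{e. \<exists>f. (e,f) \<in> ?A \<inter> Dig E M BM} = tM ` KM"
  proof
    show "{e. \<exists>f. (e,f) \<in> ?A \<inter> Dig E M BM} \<subseteq> tM ` KM"
    proof
      fix e assume "e \<in> {e. \<exists>f. (e,f) \<in> ?A \<inter> Dig E M BM}"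
      then obtain f \<alpha> where a0: "\<alpha> < xi" "(e,f) \<in> arcs (P \<alpha>)" "(e,f) \<in> Dig E M BM" by blast
      then obtain i where "Suc i < length (P \<alpha>)" "e = P \<alpha> ! i" "f = P \<alpha> ! Suc i"
        unfolding arcs_mem by blast
      note ii = this
      have "(\<alpha>, i) \<in> KM" unfolding KM_def using ii a0 by simp
      moreover have "e = tM (\<alpha>, i)" unfolding tM_def using ii by simp
      ultimately show "e \<in> tM ` KM" by blast
    qed
  next
    show "tM ` KM \<subseteq> {e. \<exists>f. (e,f) \<in> ?A \<inter> Dig E M BM}"
    proof
      fix x assume "x \<in> tM ` KM"
      then obtain \<alpha> i where ai: "(\<alpha>, i) \<in> KM" "x = P \<alpha> ! i" unfolding tM_def by auto
      have k1: "\<alpha> < xi" "Suc i < length (P \<alpha>)" "(P \<alpha> ! i, P \<alpha> ! Suc i) \<in> Dig E M BM"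
        using ai KM_def by auto
      have "(P \<alpha> ! i, P \<alpha> ! Suc i) \<in> arcs (P \<alpha>)" unfolding arcs_mem using k1(2) by blast
      thus "x \<in> {e. \<exists>f. (e,f) \<in> ?A \<inter> Dig E M BM}" using k1 ai by blast
    qed
  qed
  have setM2: "{f. \<exists>e. (e,f) \<in> ?A \<inter> Dig E M BM} = hM ` KM"
  proof
    show "{f. \<exists>e. (e,f) \<in> ?A \<inter> Dig E M BM} \<subseteq> hM ` KM"
    proof
      fix f assume "f \<in> {f. \<exists>e. (e,f) \<in> ?A \<inter> Dig E M BM}"
      then obtain e \<alpha> where a0: "\<alpha> < xi" "(e,f) \<in> arcs (P \<alpha>)" "(e,f) \<in> Dig E M BM" by blast
      then obtain i where "Suc i < length (P \<alpha>)" "e = P \<alpha> ! i" "f = P \<alpha> ! Suc i"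
        unfolding arcs_mem by blast
      note ii = this
      have "(\<alpha>, i) \<in> KM" unfolding KM_def using ii a0 by simp
      moreover have "f = hM (\<alpha>, i)" unfolding hM_def using ii by simp
      ultimately show "f \<in> hM ` KM" by blast
    qed
  next
    show "hM ` KM \<subseteq> {f. \<exists>e. (e,f) \<in> ?A \<inter> Dig E M BM}"
    proof
      fix x assume "x \<in> hM ` KM"
      then obtain \<alpha> i where ai: "(\<alpha>, i) \<in> KM" "x = P \<alpha> ! Suc i" unfolding hM_def by auto
      have k1: "\<alpha> < xi" "Suc i < length (P \<alpha>)" "(P \<alpha> ! i, P \<alpha> ! Suc i) \<in> Dig E M BM"
        using ai KM_def by auto
      have "(P \<alpha> ! i, P \<alpha> ! Suc i) \<in> arcs (P \<alpha>)" unfolding arcs_mem using k1(2) by blast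
      thus "x \<in> {f. \<exists>e. (e,f) \<in> ?A \<inter> Dig E M BM}" using k1 ai by blast
    qed
  qed
  have BMxi': "BMxi = (BM \<union> tM ` KM) - hM ` KM" unfolding BMxi_def setM1 setM2 ..
  have UM: "\<forall>k\<in>KM. fcirc E M (tM k) BM \<subseteq> U"
  proof
    fix k assume k: "k \<in> KM"
    obtain \<alpha> i where ai: "k = (\<alpha>, i)" by (cases k)
    have k1: "\<alpha> < xi" "Suc i < length (P \<alpha>)" "(P \<alpha> ! i, P \<alpha> ! Suc i) \<in> Dig E M BM"
      using k ai KM_def by auto
    have arc: "(P \<alpha> ! i, P \<alpha> ! Suc i) \<in> arcs (P \<alpha>)" unfolding arcs_mem using k1(2) by blast
    have esc: "fcirc E M (P \<alpha> ! i) BM \<in> escorts E M N BM BN (P \<alpha> ! i, P \<alpha> ! Suc i)"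
      using k1 unfolding escorts_def by auto
    show "fcirc E M (tM k) BM \<subseteq> U" using escU[OF k1(1) arc esc] ai tM_def by simp
  qed
  define KN0 where "KN0 = {(\<alpha>, i). \<alpha> < xi \<and> Suc i < length (P \<alpha>) \<and> (P \<alpha> ! Suc i, P \<alpha> ! i) \<in> Dig E N BN}"
  define kN where "kN = (\<lambda>(\<alpha>::'i, i::nat). (\<alpha>, length (P \<alpha>) - i))"
  define KN where "KN = kN ` KN0"
  define tN where "tN = (\<lambda>(\<alpha>::'i, n::nat). P \<alpha> ! Suc (length (P \<alpha>) - n))"
  define hN where "hN = (\<lambda>(\<alpha>::'i, n::nat). P \<alpha> ! (length (P \<alpha>) - n))"
  have tkN: "tN (kN (\<alpha>, i)) = P \<alpha> ! Suc i" "hN (kN (\<alpha>, i)) = P \<alpha> ! i"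
    if "(\<alpha>, i) \<in> KN0" for \<alpha> i
    using that unfolding KN0_def kN_def tN_def hN_def by auto
  have A1N: "\<forall>k\<in>KN. tN k \<in> E - BN \<and> hN k \<in> fcirc E N (tN k) BN \<and> hN k \<noteq> tN k"
  proof
    fix k assume "k \<in> KN"
    then obtain \<alpha> i where ai: "(\<alpha>, i) \<in> KN0" "k = kN (\<alpha>, i)" unfolding KN_def by auto
    show "tN k \<in> E - BN \<and> hN k \<in> fcirc E N (tN k) BN \<and> hN k \<noteq> tN k"
      using ai tkN[OF ai(1)] unfolding KN0_def Dig_def by auto
  qed
  have A2N: "\<forall>k\<in>KN. \<forall>k'\<in>KN. k < k' \<longrightarrow> hN k' \<notin> fcirc E N (tN k) BN"
  proof (intro ballI impI)
    fix k k' assume k: "k \<in> KN" and k': "k' \<in> KN" and lt: "k < k'"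
    obtain \<alpha> i where ai: "(\<alpha>, i) \<in> KN0" "k = kN (\<alpha>, i)" using k unfolding KN_def by auto
    obtain \<beta> j where bj: "(\<beta>, j) \<in> KN0" "k' = kN (\<beta>, j)" using k' unfolding KN_def by auto
    have k1: "\<alpha> < xi" "Suc i < length (P \<alpha>)" "(P \<alpha> ! Suc i, P \<alpha> ! i) \<in> Dig E N BN"
      using ai KN0_def by auto
    have k2: "\<beta> < xi" "Suc j < length (P \<beta>)" "(P \<beta> ! Suc j, P \<beta> ! j) \<in> Dig E N BN"
      using bj KN0_def by auto
    have arc: "(P \<alpha> ! i, P \<alpha> ! Suc i) \<in> arcs (P \<alpha>)" unfolding arcs_mem using k1(2) by blast
    have esc: "fcirc E N (P \<alpha> ! Suc i) BN \<in> escorts E M N BM BN (P \<alpha> ! i, P \<alpha> ! Suc i)"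
      using k1 unfolding escorts_def by auto
    have eqs: "hN k' = P \<beta> ! j" "tN k = P \<alpha> ! Suc i" using tkN ai bj by auto
    show "hN k' \<notin> fcirc E N (tN k) BN"
    proof (cases "\<alpha> < \<beta>")
      case True
      have "P \<beta> ! j \<in> set (P \<beta>)" using k2 by simp
      thus ?thesis using disj'[OF True k2(1) arc esc] eqs by auto
    next
      case False
      have "kN (\<alpha>, i) < kN (\<beta>, j)" using lt ai bj by simp
      hence ab: "\<alpha> = \<beta>" "length (P \<alpha>) - i < length (P \<beta>) - j" using False unfolding kN_def by auto
      hence l2: "length (P \<alpha>) - i < length (P \<alpha>) - j" by simp
      have ji: "j < i" using l2 k1(2) by arith
      show ?thesis
      proof
        assume "hN k' \<in> fcirc E N (tN k) BN"
        hence inC: "P \<alpha> ! j \<in> fcirc E N (P \<alpha> ! Suc i) BN" using eqs ab by simp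
        have ne: "P \<alpha> ! j \<noteq> P \<alpha> ! Suc i"
          using dist[OF k1(1)] k1(2) ji nth_eq_iff_index_eq by (metis Suc_lessD less_trans less_Suc_eq not_less_eq)
        have "(P \<alpha> ! Suc i, P \<alpha> ! j) \<in> Dig E N BN"
          using k1(3) inC ne unfolding Dig_def by auto
        hence "(P \<alpha> ! j, P \<alpha> ! Suc i) \<in> Db E M N BM BN" unfolding Db_def by auto
        moreover have "(P \<alpha> ! j, P \<alpha> ! Suc i) \<notin> arcs (P \<alpha>)"
          using not_arc[OF dist[OF k1(1)]] k1(2) ji by simp
        moreover have "j < Suc i" "Suc i < length (P \<alpha>)" using ji k1(2) by auto
        ultimately have "shortcut (Db E M N BM BN) (P \<alpha>) (P \<alpha> ! j, P \<alpha> ! Suc i)"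
          unfolding shortcut_def by blast
        thus False using nosc[OF k1(1)] by blast
      qed
    qed
  qed
  have pairN: "(e,f) \<in> ?A \<inter> (Dig E N BN)\<inverse> \<longleftrightarrow> (\<exists>k\<in>KN. e = hN k \<and> f = tN k)" for e f
  proof
    assume "(e,f) \<in> ?A \<inter> (Dig E N BN)\<inverse>"
    then obtain \<alpha> where a0: "\<alpha> < xi" "(e,f) \<in> arcs (P \<alpha>)" "(f,e) \<in> Dig E N BN" by blast
    then obtain i where a1: "Suc i < length (P \<alpha>)" "e = P \<alpha> ! i" "f = P \<alpha> ! Suc i"
        unfolding arcs_mem by blast
    note a = a0(1) a1 a0(3)
    hence ki: "(\<alpha>, i) \<in> KN0" unfolding KN0_def by simp
    hence "kN (\<alpha>, i) \<in> KN" unfolding KN_def by blast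
    moreover have "e = hN (kN (\<alpha>, i)) \<and> f = tN (kN (\<alpha>, i))" using tkN[OF ki] a by simp
    ultimately show "\<exists>k\<in>KN. e = hN k \<and> f = tN k" by blast
  next
    assume "\<exists>k\<in>KN. e = hN k \<and> f = tN k"
    then obtain k0 where k0: "k0 \<in> KN0" "e = hN (kN k0)" "f = tN (kN k0)"
      unfolding KN_def by blast
    obtain \<alpha> i where "k0 = (\<alpha>, i)" by (cases k0)
    hence ai: "(\<alpha>, i) \<in> KN0" "e = hN (kN (\<alpha>, i))" "f = tN (kN (\<alpha>, i))" using k0 by auto
    hence "e = P \<alpha> ! i" "f = P \<alpha> ! Suc i" using tkN by auto
    moreover have k1: "\<alpha> < xi" "Suc i < length (P \<alpha>)" "(P \<alpha> ! Suc i, P \<alpha> ! i) \<in> Dig E N BN"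
      using ai(1) KN0_def by auto
    moreover have "(P \<alpha> ! i, P \<alpha> ! Suc i) \<in> arcs (P \<alpha>)" unfolding arcs_mem using k1(2) by blast
    ultimately show "(e,f) \<in> ?A \<inter> (Dig E N BN)\<inverse>" by blast
  qed
  have BNxi': "BNxi = (BN \<union> tN ` KN) - hN ` KN"
  proof -
    have "{f. \<exists>e. (e,f) \<in> ?A \<inter> (Dig E N BN)\<inverse>} = tN ` KN" using pairN by blast
    moreover have "{e. \<exists>f. (e,f) \<in> ?A \<inter> (Dig E N BN)\<inverse>} = hN ` KN" using pairN by blast
    ultimately show ?thesis unfolding BNxi_def by simp
  qed
  have UN: "\<forall>k\<in>KN. fcirc E N (tN k) BN \<subseteq> U"
  proof
    fix k assume "k \<in> KN"
    then obtain \<alpha> i where ai: "(\<alpha>, i) \<in> KN0" "k = kN (\<alpha>, i)" unfolding KN_def by auto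
    have k1: "\<alpha> < xi" "Suc i < length (P \<alpha>)" "(P \<alpha> ! Suc i, P \<alpha> ! i) \<in> Dig E N BN"
      using ai KN0_def by auto
    have arc: "(P \<alpha> ! i, P \<alpha> ! Suc i) \<in> arcs (P \<alpha>)" unfolding arcs_mem using k1(2) by blast
    have esc: "fcirc E N (P \<alpha> ! Suc i) BN \<in> escorts E M N BM BN (P \<alpha> ! i, P \<alpha> ! Suc i)"
      using k1 unfolding escorts_def by auto
    show "fcirc E N (tN k) BN \<subseteq> U" using escU[OF k1(1) arc esc] ai tkN by simp
  qed
  show ?thesis
    unfolding BMxi' BNxi'
    using base_new[OF fmM bM A1M A2M] base_new[OF fmN bN A1N A2N]
      induced_new[OF fmM bM A1M A2M UM] induced_new[OF fmN bN A1N A2N UN] by blast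
qed


end
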